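(* Let $S\subset\mathbb{P}^3$ be the cubic surface $t_1t_2(t_1+t_2)=t_3^2t_4$, and let $U\subset S$ be the open subset obtained by deleting the six lines $t_i=t_j=0$ and $t_j=t_1+t_2=0$ for $i\in\{1,2\}$, $j\in\{3,4\}$. Let $N_U(B)=\#\{x\in U(\mathbb{Q}):H(x)\leq B\}$. For $v\in\mathbb{R}$ and $\mathbf{s},\mathbf{u},\mathbf{y}\in\mathbb{R}^3$ define $$\Psi(v,\mathbf{s},\mathbf{u},\mathbf{y})=\max\{|s_1s_2s_3|,\ |u_1^2u_2^2u_3^2v^3y_1y_2y_3|,\ |s_1u_1^2u_2u_3v^2y_1^2|,\ |s_2u_1u_2^2u_3v^2y_2^2|\}.$$ Then $N_U(B)$ equals $2$ times the number of $(v,\mathbf{s},\mathbf{u},\mathbf{y})$ with $v\in\mathbb{N}$, $\mathbf{s}=(s_1,s_2,s_3)\in\mathbb{N}^3$, $\mathbf{u}=(u_1,u_2,u_3)\in\mathbb{Z}^3$, $\mathbf{y}=(y_1,y_2,y_3)\in\mathbb{N}^3$ such that $$u_3>0,\quad \Psi(v,\mathbf{s},\mathbf{u},\mathbf{y})\leq B,\quad s_1u_1y_1^2+s_2u_2y_2^2+s_3u_3y_3^2=0,$$ $$|\mu(u_1u_2u_3)|=1,\quad \gcd(s_1s_2s_3,u_1u_2u_3v)=1,\quad \gcd(y_i,y_j)=1,\quad \gcd(y_i,s_j,s_k)=1,$$ where $i,j,k$ denote distinct elements of $\{1,2,3\}$.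
   Context: For $x\in\mathbb{P}^{3}(\mathbb{Q})$ written as $x=[\mathbf{t}]$ with $\mathbf{t}\in\mathbb{Z}^4$ primitive, $H(x)=\max_i|t_i|$. $\mathbb{N}=\{1,2,3,\dots\}$ and $\mu$ is the Möbius function (so $|\mu(n)|=1$ means $n$ is square-free). *)

theory Defs
  imports Complex_Main "HOL-Computational_Algebra.Squarefree" "HOL-Computational_Algebra.Primes"
begin

definition moebius :: "nat \<Rightarrow> int" where
  "moebius n = (if squarefree n then (-1) ^ card (prime_factors n) else 0)"

type_synonym vec4 = "int \<times> int \<times> int \<times> int"

definition primitive4 :: "vec4 \<Rightarrow> bool" where
  "primitive4 t = (case t of (a,b,c,d) \<Rightarrow> gcd (gcd a b) (gcd c d) = 1)"

definition neg4 :: "vec4 \<Rightarrow> vec4" where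
  "neg4 t = (case t of (a,b,c,d) \<Rightarrow> (-a,-b,-c,-d))"

definition H4 :: "vec4 \<Rightarrow> int" where
  "H4 t = (case t of (a,b,c,d) \<Rightarrow> max (max \<bar>a\<bar> \<bar>b\<bar>) (max \<bar>c\<bar> \<bar>d\<bar>))"

definition onS :: "vec4 \<Rightarrow> bool" where
  "onS t = (case t of (t1,t2,t3,t4) \<Rightarrow> t1 * t2 * (t1 + t2) = t3^2 * t4)"

definition inU :: "vec4 \<Rightarrow> bool" where
  "inU t = (case t of (t1,t2,t3,t4) \<Rightarrow>
     onS t
     \<and> \<not> (t1 = 0 \<and> t3 = 0) \<and> \<not> (t1 = 0 \<and> t4 = 0)
     \<and> \<not> (t2 = 0 \<and> t3 = 0) \<and> \<not> (t2 = 0 \<and> t4 = 0)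
     \<and> \<not> (t3 = 0 \<and> t1 + t2 = 0) \<and> \<not> (t4 = 0 \<and> t1 + t2 = 0))"

text \<open>Rational points of P^3 are identified with pairs {t, -t} of primitive
  integer vectors; N_U(B) counts those in U with height at most B.\<close>
definition N_U :: "real \<Rightarrow> nat" where
  "N_U B = card ((\<lambda>t. {t, neg4 t}) ` {t. primitive4 t \<and> inU t \<and> real_of_int (H4 t) \<le> B})"

definition Psi :: "int \<Rightarrow> int \<times> int \<times> int \<Rightarrow> int \<times> int \<times> int \<Rightarrow> int \<times> int \<times> int \<Rightarrow> int" where
  "Psi v s u y = (case s of (s1,s2,s3) \<Rightarrow> case u of (u1,u2,u3) \<Rightarrow> case y of (y1,y2,y3) \<Rightarrow>
     max (max \<bar>s1*s2*s3\<bar> \<bar>u1^2*u2^2*u3^2*v^3*y1*y2*y3\<bar>)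
         (max \<bar>s1*u1^2*u2*u3*v^2*y1^2\<bar> \<bar>s2*u1*u2^2*u3*v^2*y2^2\<bar>))"

definition param_set :: "real \<Rightarrow> (int \<times> (int \<times> int \<times> int) \<times> (int \<times> int \<times> int) \<times> (int \<times> int \<times> int)) set" where
  "param_set B = {(v, (s1,s2,s3), (u1,u2,u3), (y1,y2,y3)).
     v \<ge> 1 \<and> s1 \<ge> 1 \<and> s2 \<ge> 1 \<and> s3 \<ge> 1 \<and> y1 \<ge> 1 \<and> y2 \<ge> 1 \<and> y3 \<ge> 1
     \<and> u3 > 0
     \<and> real_of_int (Psi v (s1,s2,s3) (u1,u2,u3) (y1,y2,y3)) \<le> B
     \<and> s1*u1*y1^2 + s2*u2*y2^2 + s3*u3*y3^2 = 0
     \<and> \<bar>moebius (nat \<bar>u1*u2*u3\<bar>)\<bar> = 1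
     \<and> gcd (s1*s2*s3) (u1*u2*u3*v) = 1
     \<and> gcd y1 y2 = 1 \<and> gcd y1 y3 = 1 \<and> gcd y2 y3 = 1
     \<and> gcd y1 (gcd s2 s3) = 1 \<and> gcd y2 (gcd s1 s3) = 1 \<and> gcd y3 (gcd s1 s2) = 1}"

end

theory Submission
  imports Defs
begin

lemma shape:
  fixes A1 A2 A3 t e :: nat
  assumes "A1+A2+A3 = 2*t+e" "A1=0 \<or> A2=0 \<or> t=0 \<or> e=0"
    "A1 \<ge> min A2 A3" "A2 \<ge> min A1 A3" "A3 \<ge> min A1 A2"
  shows "(e=0 \<and> ((A1=A2 \<and> A3\<ge>A1) \<or> (A1=A3 \<and> A2 \<ge> A1) \<or> (A2=A3 \<and> A1\<ge>A2))) \<or> t=0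
     \<or> (A1=0\<and>A2=0\<and>A3=2*t+e) \<or> (A1=0\<and>A3=0\<and>A2=2*t+e) \<or> (A2=0\<and>A3=0\<and>A1=2*t+e)"
  using assms by (auto simp: min_def split: if_splits)

lemma e0case:
  fixes m c t :: nat
  assumes "2*m + c = 2*t" "c \<ge> m"
  shows "m = (c-m) mod 2 + 2*(m div 2)" "(c-m) mod 2 \<le> 1"
    "t = 2*((c-m) mod 2) + 3*(m div 2) + (c-m) div 2"
proof -
  define q where "q = m div 2"
  define r where "r = m mod 2"
  have m: "m = 2*q + r" "r < 2" unfolding q_def r_def by auto
  have cm: "c - m = 2*(t - 3*q - 2*r) + r" using assms m by linarith
  have 1: "(c-m) mod 2 = r" using cm m(2) by simp
  have 2: "(c-m) div 2 = t - 3*q - 2*r" using cm m(2) by simp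
  show "m = (c-m) mod 2 + 2*(m div 2)" "(c-m) mod 2 \<le> 1"
    "t = 2*((c-m) mod 2) + 3*(m div 2) + (c-m) div 2"
    using 1 2 m assms unfolding q_def[symmetric] by linarith+
qed

lemma val_surj:
  fixes A1 A2 A3 t e :: nat
  assumes "A1+A2+A3 = 2*t+e" "A1=0 \<or> A2=0 \<or> t=0 \<or> e=0"
    "A1 \<ge> min A2 A3" "A2 \<ge> min A1 A3" "A3 \<ge> min A1 A2"
  defines "s1 \<equiv> min A1 e" and "s2 \<equiv> min A2 e" and "s3 \<equiv> min A3 e"
  defines "g \<equiv> min (A1 - s1) (min (A2 - s2) (A3 - s3))"
  defines "b1 \<equiv> A1 - s1 - g" and "b2 \<equiv> A2 - s2 - g" and "b3 \<equiv> A3 - s3 - g"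
  shows "s1+s2+s3 = e \<and> g = b1 mod 2 + b2 mod 2 + b3 mod 2 + 2*(g div 2) \<and>
    b1 mod 2 + b2 mod 2 + b3 mod 2 \<le> 1 \<and>
    t = 2*(b1 mod 2 + b2 mod 2 + b3 mod 2) + 3*(g div 2) + b1 div 2 + b2 div 2 + b3 div 2 \<and>
    (e = 0 \<or> (b1 mod 2 + b2 mod 2 + b3 mod 2) + g div 2 = 0) \<and>
    (b1 div 2 = 0 \<or> b2 div 2 = 0) \<and> (b1 div 2 = 0 \<or> b3 div 2 = 0) \<and> (b2 div 2 = 0 \<or> b3 div 2 = 0) \<and>
    (b1 div 2 = 0 \<or> s2 = 0 \<or> s3 = 0) \<and> (b2 div 2 = 0 \<or> s1 = 0 \<or> s3 = 0) \<and> (b3 div 2 = 0 \<or> s1 = 0 \<or> s2 = 0)"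
  using shape[OF assms(1-5)]
proof (elim disjE conjE)
  assume h: "e = 0" "A1 = A2" "A1 \<le> A3"
  have v: "s1 = 0" "s2 = 0" "s3 = 0" "g = A1" "b1 = 0" "b2 = 0" "b3 = A3 - A1"
    unfolding s1_def s2_def s3_def g_def b1_def b2_def b3_def using h by auto
  have E: "A1 = (A3-A1) mod 2 + 2*(A1 div 2)" "(A3-A1) mod 2 \<le> 1"
    "t = 2*((A3-A1) mod 2) + 3*(A1 div 2) + (A3-A1) div 2"
    using e0case[of A1 A3 t] h assms(1) by auto
  show ?thesis unfolding v using E h by simp
next
  assume h: "e = 0" "A1 = A3" "A1 \<le> A2"
  have v: "s1 = 0" "s2 = 0" "s3 = 0" "g = A1" "b1 = 0" "b3 = 0" "b2 = A2 - A1"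
    unfolding s1_def s2_def s3_def g_def b1_def b2_def b3_def using h by auto
  have E: "A1 = (A2-A1) mod 2 + 2*(A1 div 2)" "(A2-A1) mod 2 \<le> 1"
    "t = 2*((A2-A1) mod 2) + 3*(A1 div 2) + (A2-A1) div 2"
    using e0case[of A1 A2 t] h assms(1) by auto
  show ?thesis unfolding v using E h by simp
next
  assume h: "e = 0" "A2 = A3" "A2 \<le> A1"
  have v: "s1 = 0" "s2 = 0" "s3 = 0" "g = A2" "b2 = 0" "b3 = 0" "b1 = A1 - A2"
    unfolding s1_def s2_def s3_def g_def b1_def b2_def b3_def using h by auto
  have E: "A2 = (A1-A2) mod 2 + 2*(A2 div 2)" "(A1-A2) mod 2 \<le> 1"
    "t = 2*((A1-A2) mod 2) + 3*(A2 div 2) + (A1-A2) div 2"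
    using e0case[of A2 A1 t] h assms(1) by auto
  show ?thesis unfolding v using E h by simp
next
  assume h: "t = 0"
  have v: "s1 = A1" "s2 = A2" "s3 = A3" "g = 0" "b1 = 0" "b2 = 0" "b3 = 0"
    unfolding s1_def s2_def s3_def g_def b1_def b2_def b3_def using h assms(1) by auto
  show ?thesis unfolding v using h assms(1) by simp
next
  assume h: "A1 = 0" "A2 = 0" "A3 = 2*t+e"
  have v: "s1 = 0" "s2 = 0" "s3 = e" "g = 0" "b1 = 0" "b2 = 0" "b3 = 2*t"
    unfolding s1_def s2_def s3_def g_def b1_def b2_def b3_def using h by auto
  show ?thesis unfolding v by simp
next
  assume h: "A1 = 0" "A3 = 0" "A2 = 2*t+e"
  have v: "s1 = 0" "s3 = 0" "s2 = e" "g = 0" "b1 = 0" "b3 = 0" "b2 = 2*t"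
    unfolding s1_def s2_def s3_def g_def b1_def b2_def b3_def using h by auto
  show ?thesis unfolding v by simp
next
  assume h: "A2 = 0" "A3 = 0" "A1 = 2*t+e"
  have v: "s2 = 0" "s3 = 0" "s1 = e" "g = 0" "b2 = 0" "b3 = 0" "b1 = 2*t"
    unfolding s1_def s2_def s3_def g_def b1_def b2_def b3_def using h by auto
  show ?thesis unfolding v by simp
qed
lemma aux_y:
  fixes s1 s2 s3 y1 y2 y3 :: nat
  assumes "y1 = 0 \<or> y2 = 0" "y1 = 0 \<or> y3 = 0"
    "y1 = 0 \<or> s2 = 0 \<or> s3 = 0"
    "s2+2*y2 \<ge> min (s1+2*y1) (s3+2*y3)"
       "s3+2*y3 \<ge> min (s1+2*y1) (s2+2*y2)"
  shows "y1 = 0 \<or> s2+s3 = 0"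
proof (cases "y1 = 0")
  case False
  then have "y2 = 0" "y3 = 0" "s2 = 0 \<or> s3 = 0" using assms by auto
  then show ?thesis using assms(4,5) False by (auto simp: min_def split: if_splits)
qed simp

lemma aux_my:
  fixes m1 m2 m3 y1 y2 y3 :: nat
  assumes "m1+m2+m3 \<le> 1" "y1 = 0 \<or> y2 = 0" "y1 = 0 \<or> y3 = 0" "y2 = 0 \<or> y3 = 0"
  shows "(m1 = 0 \<and> y1 = 0) \<or> (m2 = 0 \<and> y2 = 0) \<or> (m3 = 0 \<and> y3 = 0)"
  using assms by auto

lemma val_inj:
  fixes s1 s2 s3 m1 m2 m3 n y1 y2 y3 :: nat
  assumes H1: "m1+m2+m3 \<le> 1" and H2: "s1+s2+s3 = 0 \<or> m1+m2+m3+n = 0"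
    and H3: "y1 = 0 \<or> y2 = 0" "y1 = 0 \<or> y3 = 0" "y2 = 0 \<or> y3 = 0"
    and H4: "y1 = 0 \<or> s2 = 0 \<or> s3 = 0" "y2 = 0 \<or> s1 = 0 \<or> s3 = 0" "y3 = 0 \<or> s1 = 0 \<or> s2 = 0"
    and H5: "s1+m1+2*y1 \<ge> min (s2+m2+2*y2) (s3+m3+2*y3)"
       "s2+m2+2*y2 \<ge> min (s1+m1+2*y1) (s3+m3+2*y3)"
       "s3+m3+2*y3 \<ge> min (s1+m1+2*y1) (s2+m2+2*y2)"
  shows "min (s1 + m1 + (m1+m2+m3) + 2*n + 2*y1) (s1+s2+s3) = s1 \<and>
    min (s2 + m2 + (m1+m2+m3) + 2*n + 2*y2) (s1+s2+s3) = s2 \<and>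
    min (s3 + m3 + (m1+m2+m3) + 2*n + 2*y3) (s1+s2+s3) = s3 \<and>
    min (m1 + (m1+m2+m3) + 2*n + 2*y1) (min (m2 + (m1+m2+m3) + 2*n + 2*y2) (m3 + (m1+m2+m3) + 2*n + 2*y3)) = m1+m2+m3+2*n \<and>
    (s1 + m1 + (m1+m2+m3) + 2*n + 2*y1 = 0 \<or> s2 + m2 + (m1+m2+m3) + 2*n + 2*y2 = 0 \<or>
     2*(m1+m2+m3) + 3*n + y1+y2+y3 = 0 \<or> s1+s2+s3 = 0)"
proof -
  have C2: "min (m1 + (m1+m2+m3) + 2*n + 2*y1) (min (m2 + (m1+m2+m3) + 2*n + 2*y2) (m3 + (m1+m2+m3) + 2*n + 2*y3)) = m1+m2+m3+2*n"
    using aux_my[OF H1 H3] by (elim disjE) (simp_all add: min_def)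
  show ?thesis
  proof (cases "s1+s2+s3 = 0")
    case True
    then show ?thesis using C2 by simp
  next
    case False
    then have z: "m1 = 0" "m2 = 0" "m3 = 0" "n = 0" using H2 by auto
    have Y1: "y1 = 0 \<or> s2+s3 = 0"
      by (rule aux_y[of y1 y2 y3 s2 s3 s1]) (use H3 H4 H5 z in auto)
    have Y2: "y2 = 0 \<or> s1+s3 = 0"
      by (rule aux_y[of y2 y1 y3 s1 s3 s2]) (use H3 H4 H5 z in \<open>auto simp: min.commute\<close>)
    have Y3: "y3 = 0 \<or> s1+s2 = 0"
      by (rule aux_y[of y3 y1 y2 s1 s2 s3]) (use H3 H4 H5 z in \<open>auto simp: min.commute\<close>)
    have c1: "min (s1 + 2*y1) (s1+s2+s3) = s1" using Y1 by (elim disjE) (simp_all add: min_def)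
    have c2: "min (s2 + 2*y2) (s1+s2+s3) = s2" using Y2 by (elim disjE) (simp_all add: min_def)
    have c3: "min (s3 + 2*y3) (s1+s2+s3) = s3" using Y3 by (elim disjE) (simp_all add: min_def)
    have c4: "s1 + 2*y1 = 0 \<or> s2 + 2*y2 = 0 \<or> y1+y2+y3 = 0"
    proof (cases "y1 = 0")
      case y1: True
      show ?thesis
      proof (cases "y2 = 0")
        case True
        then show ?thesis using y1 Y3 by auto
      next
        case False
        then show ?thesis using y1 Y2 by auto
      qed
    next
      case False
      then show ?thesis using Y1 H3 by auto
    qed
    show ?thesis using C2 c1 c2 c3 c4 unfolding z by (simp del: min_0L min_0R) blast
  qed
qed

lemma val_surj':
  fixes A1 A2 A3 t e s1 s2 s3 g b1 b2 b3 m1 m2 m3 z1 z2 z3 nu :: nat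
  assumes "A1+A2+A3 = 2*t+e" "A1=0 \<or> A2=0 \<or> t=0 \<or> e=0"
    "A1 \<ge> min A2 A3" "A2 \<ge> min A1 A3" "A3 \<ge> min A1 A2"
    "s1 = min A1 e" "s2 = min A2 e" "s3 = min A3 e"
    "g = min (A1 - s1) (min (A2 - s2) (A3 - s3))"
    "b1 = A1 - s1 - g" "b2 = A2 - s2 - g" "b3 = A3 - s3 - g"
    "m1 = b1 mod 2" "m2 = b2 mod 2" "m3 = b3 mod 2"
    "z1 = b1 div 2" "z2 = b2 div 2" "z3 = b3 div 2" "nu = g div 2"
  shows "s1+s2+s3 = e \<and> g = m1 + m2 + m3 + 2*nu \<and>
    m1 + m2 + m3 \<le> 1 \<and>
    t = 2*(m1 + m2 + m3) + 3*nu + z1 + z2 + z3 \<and>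
    (e = 0 \<or> m1 + m2 + m3 + nu = 0) \<and>
    (z1 = 0 \<or> z2 = 0) \<and> (z1 = 0 \<or> z3 = 0) \<and> (z2 = 0 \<or> z3 = 0) \<and>
    (z1 = 0 \<or> s2 = 0 \<or> s3 = 0) \<and> (z2 = 0 \<or> s1 = 0 \<or> s3 = 0) \<and> (z3 = 0 \<or> s1 = 0 \<or> s2 = 0)"
  using val_surj[OF assms(1-5)] by (simp only: assms(6-19))

lemma pelem: "prime (p::int) \<Longrightarrow> prime_elem p" by auto

lemma int_eq_mult:
  fixes x y :: int
  assumes "x > 0" "y > 0" "\<And>p. prime p \<Longrightarrow> multiplicity p x = multiplicity p y"
  shows "x = y"
proof -
  have "normalize x = normalize y" by (rule multiplicity_eq_imp_eq) (use assms in auto)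
  thus ?thesis using assms by simp
qed

lemma gcd_eq1_mult:
  fixes x y :: int
  assumes "x \<noteq> 0" "y \<noteq> 0" "\<And>p. prime p \<Longrightarrow> multiplicity p x = 0 \<or> multiplicity p y = 0"
  shows "gcd x y = 1"
proof (rule int_eq_mult)
  show "gcd x y > 0" using assms by simp
  fix p :: int assume p: "prime p"
  show "multiplicity p (gcd x y) = multiplicity p 1"
    using assms(3)[OF p] multiplicity_gcd[OF assms(1,2) p] by auto
qed simp

lemma mult_abs [simp]: "multiplicity p \<bar>x::int\<bar> = multiplicity p x"
  by (cases "x \<ge> 0") auto

lemma mult_div:
  fixes x y p :: int
  assumes "prime p" "y dvd x" "x \<noteq> 0"
  shows "multiplicity p (x div y) = multiplicity p x - multiplicity p y"
proof -
  have y: "y \<noteq> 0" using assms by auto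
  have q: "x div y \<noteq> 0" using assms by (auto elim: dvdE)
  have "x = y * (x div y)" using assms by simp
  hence "multiplicity p x = multiplicity p y + multiplicity p (x div y)"
    using prime_elem_multiplicity_mult_distrib[OF pelem[OF assms(1)] y q] by simp
  thus ?thesis by simp
qed

lemma ultra:
  fixes a b c p :: int
  assumes "prime p" "a + b + c = 0" "a \<noteq> 0"
  shows "multiplicity p a \<ge> min (multiplicity p b) (multiplicity p c)"
proof -
  define k where "k = min (multiplicity p b) (multiplicity p c)"
  have "p ^ k dvd b" "p ^ k dvd c" unfolding k_def by (auto intro: multiplicity_dvd')
  hence "p ^ k dvd -(b+c)" by auto
  moreover have "-(b+c) = a" using assms by simp
  ultimately have "p ^ k dvd a" by simp
  moreover have "\<not> is_unit p" using assms(1) not_prime_unit by blast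
  ultimately show ?thesis unfolding k_def[symmetric] using multiplicity_geI assms(3) by blast
qed

lemma mult_pos_dvd:
  fixes x p :: int
  assumes "prime p" "x \<noteq> 0"
  shows "p dvd x \<longleftrightarrow> multiplicity p x > 0"
  using prime_multiplicity_gt_zero_iff[OF pelem[OF assms(1)] assms(2)] by simp

lemma squarefree_mult:
  fixes x :: int
  assumes "x \<noteq> 0" "\<And>p. prime p \<Longrightarrow> multiplicity p x \<le> 1"
  shows "squarefree x"
  using squarefree_factorial_semiring''[OF assms(1)] assms(2) by auto

lemma squarefree_mult_le:
  fixes x p :: int
  assumes "squarefree x" "prime p"
  shows "multiplicity p x \<le> 1"
proof -
  have "x \<noteq> 0" using assms(1) by auto
  thus ?thesis using squarefree_factorial_semiring''[of x] assms by auto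
qed

lemma sqf_nat_abs: "squarefree (nat \<bar>w\<bar>) \<longleftrightarrow> squarefree (w::int)"
proof
  assume h: "squarefree (nat \<bar>w\<bar>)"
  show "squarefree w"
  proof (rule squarefreeI)
    fix x :: int assume "x^2 dvd w"
    hence "int ((nat \<bar>x\<bar>)^2) dvd int (nat \<bar>w\<bar>)" by (simp add: power_abs)
    hence "(nat \<bar>x\<bar>)^2 dvd nat \<bar>w\<bar>" by (simp only: int_dvd_int_iff)
    hence "nat \<bar>x\<bar> dvd 1" using squarefreeD[OF h] by blast
    thus "x dvd 1" by (simp add: nat_abs_dvd_iff)
  qed
next
  assume h: "squarefree w"
  show "squarefree (nat \<bar>w\<bar>)"
  proof (rule squarefreeI)
    fix x :: nat assume "x^2 dvd nat \<bar>w\<bar>"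
    hence "int (x^2) dvd int (nat \<bar>w\<bar>)" by (simp only: int_dvd_int_iff)
    hence "(int x)^2 dvd w" by simp
    hence "int x dvd 1" using squarefreeD[OF h] by blast
    thus "x dvd 1" by simp
  qed
qed

lemma moeb_abs: "\<bar>moebius n\<bar> = 1 \<longleftrightarrow> squarefree n"
  by (simp add: moebius_def power_abs)

lemma L1:
  fixes u y :: int
  assumes "squarefree u" "y > 0"
  shows "square_part (u * y^2) = y" "squarefree_part (u * y^2) = u"
proof -
  have u: "u \<noteq> 0" using assms by auto
  have "square_part (u * y^2) = y"
  proof (rule int_eq_mult)
    show "square_part (u * y^2) > 0" using u assms(2)
      by (metis le_less normalize_square_part abs_ge_zero square_part_0_iff mult_eq_0_iff
          normalize_int_def power_not_zero less_irrefl)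
    fix p :: int assume p: "prime p"
    have m: "multiplicity p (u*y^2) = multiplicity p u + 2 * multiplicity p y"
      using u assms(2) prime_elem_multiplicity_mult_distrib[OF pelem[OF p], of u "y^2"]
        prime_elem_multiplicity_power_distrib[OF pelem[OF p], of y 2] by simp
    have "multiplicity p (square_part (u*y^2)) = multiplicity p (u*y^2) div 2"
      using prime_multiplicity_square_part[OF p] .
    also have "\<dots> = multiplicity p y" unfolding m using squarefree_mult_le[OF assms(1) p] by simp
    finally show "multiplicity p (square_part (u * y^2)) = multiplicity p y" .
  qed (use assms in auto)
  thus "square_part (u * y^2) = y" .
  thus "squarefree_part (u * y^2) = u" using u assms(2) by (simp add: squarefree_part_def)
qed

lemma sqp_pos: "(x::int) \<noteq> 0 \<Longrightarrow> square_part x > 0"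
  by (metis le_less normalize_square_part abs_ge_zero square_part_0_iff normalize_int_def)

definition psi4 :: "int \<Rightarrow> int \<Rightarrow> int \<Rightarrow> int \<Rightarrow> (int \<times> (int \<times> int \<times> int) \<times> (int \<times> int \<times> int) \<times> (int \<times> int \<times> int)) \<times> bool" where
"psi4 t1 t2 t3 n = (let a3 = -(t1+t2); s1 = gcd t1 n; s2 = gcd t2 n; s3 = gcd a3 n;
   G = gcd (t1 div s1) (gcd (t2 div s2) (a3 div s3));
   b1 = t1 div s1 div G; b2 = t2 div s2 div G; b3 = a3 div s3 div G
 in ((square_part G, (s1,s2,s3), (sgn b3 * squarefree_part b1, sgn b3 * squarefree_part b2, sgn b3 * squarefree_part b3),
      (square_part b1, square_part b2, square_part b3)), t3 > 0))"

lemma surj_core: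
  fixes t1 t2 t3 t4 :: int
  assumes prim: "primitive4 (t1,t2,t3,t4)" and U: "inU (t1,t2,t3,t4)" and neg: "t4 < 0"
  defines "a3 \<equiv> -(t1+t2)" and "n \<equiv> -t4"
  defines "s1 \<equiv> gcd t1 n" and "s2 \<equiv> gcd t2 n" and "s3 \<equiv> gcd a3 n"
  defines "G \<equiv> gcd (t1 div s1) (gcd (t2 div s2) (a3 div s3))"
  defines "b1 \<equiv> t1 div s1 div G" and "b2 \<equiv> t2 div s2 div G" and "b3 \<equiv> a3 div s3 div G"
  defines "v \<equiv> square_part G"
  defines "y1 \<equiv> square_part b1" and "y2 \<equiv> square_part b2" and "y3 \<equiv> square_part b3"
  defines "q1 \<equiv> squarefree_part b1" and "q2 \<equiv> squarefree_part b2" and "q3 \<equiv> squarefree_part b3"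
  defines "u1 \<equiv> sgn b3 * q1" and "u2 \<equiv> sgn b3 * q2" and "u3 \<equiv> sgn b3 * q3"
  shows "\<exists>v s1 s2 s3 y1 y2 y3 u3 u1 u2. v \<ge> 1 \<and> s1 \<ge> 1 \<and> s2 \<ge> 1 \<and> s3 \<ge> 1 \<and> y1 \<ge> 1 \<and> y2 \<ge> 1 \<and> y3 \<ge> 1 \<and> u3 > 0
    \<and> t1 = s1*u1^2*u2*u3*v^2*y1^2 \<and> t2 = s2*u1*u2^2*u3*v^2*y2^2
    \<and> \<bar>t3\<bar> = u1^2*u2^2*u3^2*v^3*y1*y2*y3 \<and> t4 = -(s1*s2*s3)
    \<and> s1*u1*y1^2 + s2*u2*y2^2 + s3*u3*y3^2 = 0
    \<and> \<bar>moebius (nat \<bar>u1*u2*u3\<bar>)\<bar> = 1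
    \<and> gcd (s1*s2*s3) (u1*u2*u3*v) = 1
    \<and> gcd y1 y2 = 1 \<and> gcd y1 y3 = 1 \<and> gcd y2 y3 = 1
    \<and> gcd y1 (gcd s2 s3) = 1 \<and> gcd y2 (gcd s1 s3) = 1 \<and> gcd y3 (gcd s1 s2) = 1
    \<and> t3 \<noteq> 0 \<and> psi4 t1 t2 t3 n = ((v,(s1,s2,s3),(u1,u2,u3),(y1,y2,y3)), t3 > 0)"
proof -
  have PSI: "psi4 t1 t2 t3 n = ((v,(s1,s2,s3),(u1,u2,u3),(y1,y2,y3)), t3 > 0)"
    unfolding psi4_def Let_def v_def y1_def y2_def y3_def u1_def u2_def u3_def q1_def q2_def q3_def
      b1_def b2_def b3_def G_def s1_def s2_def s3_def a3_def ..
  have S: "t1 * t2 * (t1 + t2) = t3^2 * t4" using U by (simp add: inU_def onS_def)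
  have nz4: "t4 \<noteq> 0" using neg by simp
  have nz3: "t3 \<noteq> 0"
  proof
    assume "t3 = 0"
    then have "t1 * t2 * (t1 + t2) = 0" using S by simp
    then show False using U \<open>t3 = 0\<close> by (auto simp: inU_def)
  qed
  have nz1: "t1 \<noteq> 0" using S U nz3 nz4 by (auto simp: inU_def)
  have nz2: "t2 \<noteq> 0" using S U nz3 nz4 by (auto simp: inU_def)
  have nza3: "a3 \<noteq> 0" using S U nz3 nz4 by (auto simp: inU_def a3_def)
  define T where "T = \<bar>t3\<bar>"
  have Tpos: "T > 0" using nz3 by (simp add: T_def)
  have npos: "n > 0" using neg by (simp add: n_def)
  have key: "t1 * t2 * a3 = T^2 * n"
    using S by (simp add: a3_def n_def T_def power2_abs algebra_simps)
  have sum0: "t1 + t2 + a3 = 0" by (simp add: a3_def)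
  have s1p: "s1 > 0" "s1 dvd t1" "s1 dvd n" using nz1 unfolding s1_def by auto
  have s2p: "s2 > 0" "s2 dvd t2" "s2 dvd n" using nz2 unfolding s2_def by auto
  have s3p: "s3 > 0" "s3 dvd a3" "s3 dvd n" using nza3 unfolding s3_def by auto
  define al1 where "al1 = t1 div s1"
  define al2 where "al2 = t2 div s2"
  define al3 where "al3 = a3 div s3"
  have al: "t1 = s1 * al1" "t2 = s2 * al2" "a3 = s3 * al3"
    using s1p s2p s3p by (simp_all add: al1_def al2_def al3_def)
  have alnz: "al1 \<noteq> 0" "al2 \<noteq> 0" "al3 \<noteq> 0" using al nz1 nz2 nza3 by auto
  have G_def': "G = gcd al1 (gcd al2 al3)" by (simp add: G_def al1_def al2_def al3_def)
  have Gp: "G > 0" "G dvd al1" "G dvd al2" "G dvd al3" using alnz unfolding G_def'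
    by (auto, meson dvd_trans gcd_dvd1 gcd_dvd2, meson dvd_trans gcd_dvd2)
  have b_def': "b1 = al1 div G" "b2 = al2 div G" "b3 = al3 div G"
    by (simp_all add: b1_def b2_def b3_def al1_def al2_def al3_def)
  have bal: "al1 = G * b1" "al2 = G * b2" "al3 = G * b3" using Gp by (simp_all add: b_def')
  have bnz: "b1 \<noteq> 0" "b2 \<noteq> 0" "b3 \<noteq> 0" using bal alnz by auto
  have vpos: "v > 0" using sqp_pos Gp(1) by (simp add: v_def)
  have ypos: "y1 > 0" "y2 > 0" "y3 > 0" using sqp_pos bnz by (simp_all add: y1_def y2_def y3_def)
  have bq: "b1 = q1 * y1^2" "b2 = q2 * y2^2" "b3 = q3 * y3^2"
    using squarefree_decompose by (simp_all add: q1_def q2_def q3_def y1_def y2_def y3_def)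
  have qnz: "q1 \<noteq> 0" "q2 \<noteq> 0" "q3 \<noteq> 0" by (simp_all add: q1_def q2_def q3_def)
  define P where "P = q1 * q2 * q3"
  have VAL: "multiplicity p s1 + multiplicity p s2 + multiplicity p s3 = multiplicity p n \<and>
    multiplicity p G = multiplicity p q1 + multiplicity p q2 + multiplicity p q3 + 2*multiplicity p v \<and>
    multiplicity p q1 + multiplicity p q2 + multiplicity p q3 \<le> 1 \<and>
    multiplicity p T = 2*(multiplicity p q1 + multiplicity p q2 + multiplicity p q3) + 3*multiplicity p v
       + multiplicity p y1 + multiplicity p y2 + multiplicity p y3 \<and>
    (multiplicity p n = 0 \<or> multiplicity p q1 + multiplicity p q2 + multiplicity p q3 + multiplicity p v = 0) \<and>
    (multiplicity p y1 = 0 \<or> multiplicity p y2 = 0) \<and> (multiplicity p y1 = 0 \<or> multiplicity p y3 = 0) \<and>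
    (multiplicity p y2 = 0 \<or> multiplicity p y3 = 0) \<and>
    (multiplicity p y1 = 0 \<or> multiplicity p s2 = 0 \<or> multiplicity p s3 = 0) \<and>
    (multiplicity p y2 = 0 \<or> multiplicity p s1 = 0 \<or> multiplicity p s3 = 0) \<and>
    (multiplicity p y3 = 0 \<or> multiplicity p s1 = 0 \<or> multiplicity p s2 = 0)"
    if p: "prime p" for p
  proof (rule val_surj')
    have pe: "prime_elem p" using p by auto
    note md = prime_elem_multiplicity_mult_distrib[OF pe] prime_elem_multiplicity_power_distrib[OF pe]
    have "multiplicity p (t1 * t2 * a3) = multiplicity p (T^2 * n)" using key by simp
    thus "multiplicity p t1 + multiplicity p t2 + multiplicity p a3 = 2 * multiplicity p T + multiplicity p n"
      using nz1 nz2 nza3 Tpos npos by (simp add: md)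
    show "multiplicity p t1 = 0 \<or> multiplicity p t2 = 0 \<or> multiplicity p T = 0 \<or> multiplicity p n = 0"
    proof (rule ccontr)
      assume "\<not> ?thesis"
      hence "p dvd t1" "p dvd t2" "p dvd t3" "p dvd t4"
        using mult_pos_dvd[OF p] nz1 nz2 nz3 nz4 by (auto simp: T_def n_def)
      moreover have "gcd (gcd t1 t2) (gcd t3 t4) = 1" using prim by (simp add: primitive4_def)
      ultimately have "p dvd 1" by (metis gcd_greatest)
      thus False using p not_prime_unit by blast
    qed
    show "multiplicity p t1 \<ge> min (multiplicity p t2) (multiplicity p a3)"
      by (rule ultra[OF p _ nz1]) (simp add: a3_def)
    show "multiplicity p t2 \<ge> min (multiplicity p t1) (multiplicity p a3)"
      by (rule ultra[OF p _ nz2]) (simp add: a3_def)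
    show "multiplicity p a3 \<ge> min (multiplicity p t1) (multiplicity p t2)"
      by (rule ultra[OF p _ nza3]) (simp add: a3_def)
    show m1: "multiplicity p s1 = min (multiplicity p t1) (multiplicity p n)"
      unfolding s1_def using multiplicity_gcd[OF nz1 _ p] npos by simp
    show m2: "multiplicity p s2 = min (multiplicity p t2) (multiplicity p n)"
      unfolding s2_def using multiplicity_gcd[OF nz2 _ p] npos by simp
    show m3: "multiplicity p s3 = min (multiplicity p a3) (multiplicity p n)"
      unfolding s3_def using multiplicity_gcd[OF nza3 _ p] npos by simp
    have ma: "multiplicity p al1 = multiplicity p t1 - multiplicity p s1"
      "multiplicity p al2 = multiplicity p t2 - multiplicity p s2"
      "multiplicity p al3 = multiplicity p a3 - multiplicity p s3"
      using mult_div[OF p] s1p s2p s3p nz1 nz2 nza3 by (simp_all add: al1_def al2_def al3_def)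
    have gnz: "gcd al2 al3 \<noteq> 0" using alnz by simp
    show mG: "multiplicity p G = min (multiplicity p t1 - multiplicity p s1)
       (min (multiplicity p t2 - multiplicity p s2) (multiplicity p a3 - multiplicity p s3))"
      unfolding G_def' multiplicity_gcd[OF alnz(1) gnz p] multiplicity_gcd[OF alnz(2,3) p] ma ..
    show "multiplicity p b1 = multiplicity p t1 - multiplicity p s1 - multiplicity p G"
      "multiplicity p b2 = multiplicity p t2 - multiplicity p s2 - multiplicity p G"
      "multiplicity p b3 = multiplicity p a3 - multiplicity p s3 - multiplicity p G"
      using mult_div[OF p] Gp alnz ma by (simp_all add: b_def')
    show "multiplicity p q1 = multiplicity p b1 mod 2" "multiplicity p q2 = multiplicity p b2 mod 2"
      "multiplicity p q3 = multiplicity p b3 mod 2"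
      by (simp_all add: q1_def q2_def q3_def prime_multiplicity_squarefree_part[OF p])
    show "multiplicity p y1 = multiplicity p b1 div 2" "multiplicity p y2 = multiplicity p b2 div 2"
      "multiplicity p y3 = multiplicity p b3 div 2" "multiplicity p v = multiplicity p G div 2"
      by (simp_all add: y1_def y2_def y3_def v_def prime_multiplicity_square_part[OF p])
  qed
  note md = prime_elem_multiplicity_mult_distrib[OF pelem] prime_elem_multiplicity_power_distrib[OF pelem]
  have nprod: "n = s1 * s2 * s3"
  proof (rule int_eq_mult)
    fix p :: int assume p: "prime p"
    show "multiplicity p n = multiplicity p (s1 * s2 * s3)"
      using VAL[OF p] s1p s2p s3p p by (simp add: md)
  qed (use npos s1p s2p s3p in auto)
  have "t1 * t2 * a3 = (s1*s2*s3) * (G^3 * (b1*b2*b3))"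
    unfolding al bal by (simp add: algebra_simps power3_eq_cube)
  hence "T^2 * n = n * (G^3 * (b1*b2*b3))" using key nprod by simp
  hence GT: "G^3 * (b1*b2*b3) = T^2" using npos by simp
  have bprod: "b1*b2*b3 > 0"
  proof -
    have "G^3 * (b1*b2*b3) > 0" using GT Tpos by simp
    thus ?thesis using Gp(1) by (simp add: zero_less_mult_iff)
  qed
  have "b1*b2*b3 = P * (y1*y2*y3)^2" unfolding bq P_def by (simp add: algebra_simps power2_eq_square)
  hence Ppos: "P > 0" using bprod ypos by (simp add: zero_less_mult_iff)
  have GP: "G = P * v^2"
  proof (rule int_eq_mult)
    fix p :: int assume p: "prime p"
    show "multiplicity p G = multiplicity p (P * v^2)"
      using VAL[OF p] qnz vpos p by (simp add: md P_def)
  qed (use Gp Ppos vpos in auto)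
  have TP: "T = P^2 * v^3 * y1 * y2 * y3"
  proof (rule int_eq_mult)
    fix p :: int assume p: "prime p"
    show "multiplicity p T = multiplicity p (P^2 * v^3 * y1 * y2 * y3)"
      using VAL[OF p] qnz vpos ypos p by (simp add: md P_def)
  qed (use Tpos Ppos vpos ypos in auto)
  define \<sigma> where "\<sigma> = sgn b3"
  have ss: "\<sigma> * \<sigma> = 1" using bnz by (simp add: \<sigma>_def sgn_if)
  have u3pos: "u3 > 0"
  proof -
    have "sgn b3 = sgn q3" using ypos unfolding bq by (simp add: sgn_mult)
    thus ?thesis using qnz unfolding u3_def by (simp add: sgn_if)
  qed
  have uP: "u1*u2*u3 = \<sigma> * P" unfolding u1_def u2_def u3_def P_def \<sigma>_def[symmetric]
    using ss by (simp add: algebra_simps)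
  have e1: "t1 = s1*u1^2*u2*u3*v^2*y1^2"
  proof -
    have "s1*u1^2*u2*u3*v^2*y1^2 = (\<sigma>*\<sigma>)*(\<sigma>*\<sigma>)*(s1*q1*P*v^2*y1^2)"
      unfolding u1_def u2_def u3_def P_def \<sigma>_def[symmetric] by (simp add: algebra_simps power2_eq_square)
    also have "\<dots> = t1" unfolding ss al bal GP bq by (simp add: algebra_simps)
    finally show ?thesis by simp
  qed
  have e2: "t2 = s2*u1*u2^2*u3*v^2*y2^2"
  proof -
    have "s2*u1*u2^2*u3*v^2*y2^2 = (\<sigma>*\<sigma>)*(\<sigma>*\<sigma>)*(s2*q2*P*v^2*y2^2)"
      unfolding u1_def u2_def u3_def P_def \<sigma>_def[symmetric] by (simp add: algebra_simps power2_eq_square)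
    also have "\<dots> = t2" unfolding ss al bal GP bq by (simp add: algebra_simps)
    finally show ?thesis by simp
  qed
  have e3: "\<bar>t3\<bar> = u1^2*u2^2*u3^2*v^3*y1*y2*y3"
  proof -
    have "u1^2*u2^2*u3^2 = (u1*u2*u3)^2" by (simp add: power_mult_distrib)
    also have "\<dots> = (\<sigma>*\<sigma>) * P^2" unfolding uP by (simp add: power2_eq_square algebra_simps)
    finally have "u1^2*u2^2*u3^2 = P^2" using ss by simp
    thus ?thesis using TP by (simp add: T_def)
  qed
  have e4: "t4 = -(s1*s2*s3)" using nprod by (simp add: n_def)
  have eq: "s1*u1*y1^2 + s2*u2*y2^2 + s3*u3*y3^2 = 0"
  proof -
    have "(P*v^2) * (s1*q1*y1^2 + s2*q2*y2^2 + s3*q3*y3^2) = t1 + t2 + a3"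
      unfolding al bal GP bq by (simp add: algebra_simps)
    hence "s1*q1*y1^2 + s2*q2*y2^2 + s3*q3*y3^2 = 0" using sum0 Ppos vpos by simp
    moreover have "s1*u1*y1^2 + s2*u2*y2^2 + s3*u3*y3^2 = \<sigma> * (s1*q1*y1^2 + s2*q2*y2^2 + s3*q3*y3^2)"
      unfolding u1_def u2_def u3_def \<sigma>_def by (simp add: algebra_simps)
    ultimately show ?thesis by simp
  qed
  have absu: "\<bar>u1*u2*u3\<bar> = P" using uP ss Ppos by (simp add: abs_mult sgn_if \<sigma>_def split: if_splits)
  have sqfP: "squarefree P"
  proof (rule squarefree_mult)
    fix p :: int assume p: "prime p"
    show "multiplicity p P \<le> 1" using VAL[OF p] qnz p by (simp add: md P_def)
  qed (use Ppos in simp)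
  have moeb: "\<bar>moebius (nat \<bar>u1*u2*u3\<bar>)\<bar> = 1"
    unfolding moeb_abs absu using sqf_nat_abs[of P] sqfP Ppos by simp
  have g1: "gcd (s1*s2*s3) (u1*u2*u3*v) = 1"
  proof (rule gcd_eq1_mult)
    fix p :: int assume p: "prime p"
    have "multiplicity p (u1*u2*u3*v) = multiplicity p \<bar>u1*u2*u3*v\<bar>" by simp
    also have "\<bar>u1*u2*u3*v\<bar> = P * v" using absu vpos by (simp add: abs_mult)
    finally have "multiplicity p (u1*u2*u3*v) = multiplicity p (P * v)" .
    thus "multiplicity p (s1*s2*s3) = 0 \<or> multiplicity p (u1*u2*u3*v) = 0"
      using VAL[OF p] qnz vpos p unfolding nprod[symmetric] by (simp add: md P_def)
  qed (use s1p s2p s3p uP Ppos vpos ss in auto)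
  have gy: "gcd y1 y2 = 1" "gcd y1 y3 = 1" "gcd y2 y3 = 1"
    by (rule gcd_eq1_mult; use VAL ypos in auto)+
  have gys: "gcd y1 (gcd s2 s3) = 1" "gcd y2 (gcd s1 s3) = 1" "gcd y3 (gcd s1 s2) = 1"
  proof -
    have nz: "s1 \<noteq> 0" "s2 \<noteq> 0" "s3 \<noteq> 0" using s1p s2p s3p by auto
    show "gcd y1 (gcd s2 s3) = 1"
    proof (rule gcd_eq1_mult)
      fix p :: int assume p: "prime p"
      show "multiplicity p y1 = 0 \<or> multiplicity p (gcd s2 s3) = 0"
        using VAL[OF p] multiplicity_gcd[OF nz(2,3) p] by auto
    qed (use ypos nz in auto)
    show "gcd y2 (gcd s1 s3) = 1"
    proof (rule gcd_eq1_mult)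
      fix p :: int assume p: "prime p"
      show "multiplicity p y2 = 0 \<or> multiplicity p (gcd s1 s3) = 0"
        using VAL[OF p] multiplicity_gcd[OF nz(1,3) p] by auto
    qed (use ypos nz in auto)
    show "gcd y3 (gcd s1 s2) = 1"
    proof (rule gcd_eq1_mult)
      fix p :: int assume p: "prime p"
      show "multiplicity p y3 = 0 \<or> multiplicity p (gcd s1 s2) = 0"
        using VAL[OF p] multiplicity_gcd[OF nz(1,2) p] by auto
    qed (use ypos nz in auto)
  qed
  have ALL: "v \<ge> 1 \<and> s1 \<ge> 1 \<and> s2 \<ge> 1 \<and> s3 \<ge> 1 \<and> y1 \<ge> 1 \<and> y2 \<ge> 1 \<and> y3 \<ge> 1 \<and> u3 > 0     \<and> t1 = s1*u1^2*u2*u3*v^2*y1^2 \<and> t2 = s2*u1*u2^2*u3*v^2*y2^2     \<and> \<bar>t3\<bar> = u1^2*u2^2*u3^2*v^3*y1*y2*y3 \<and> t4 = -(s1*s2*s3)     \<and> s1*u1*y1^2 + s2*u2*y2^2 + s3*u3*y3^2 = 0     \<and> \<bar>moebius (nat \<bar>u1*u2*u3\<bar>)\<bar> = 1     \<and> gcd (s1*s2*s3) (u1*u2*u3*v) = 1     \<and> gcd y1 y2 = 1 \<and> gcd y1 y3 = 1 \<and> gcd y2 y3 = 1     \<and> gcd y1 (gcd s2 s3) = 1 \<and> gcd y2 (gcd s1 s3) = 1 \<and> gcd y3 (gcd s1 s2) = 1     \<and> t3 \<noteq> 0 \<and> psi4 t1 t2 t3 n = ((v,(s1,s2,s3),(u1,u2,u3),(y1,y2,y3)),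 t3 > 0)"
  proof -
    have F: "v \<ge> 1" "s1 \<ge> 1" "s2 \<ge> 1" "s3 \<ge> 1" "y1 \<ge> 1" "y2 \<ge> 1" "y3 \<ge> 1"
      using vpos s1p s2p s3p ypos by simp_all
    show ?thesis by (intro conjI) (fact F u3pos e1 e2 e3 e4 eq moeb g1 gy gys nz3 PSI)+
  qed
  show ?thesis
    apply (rule exI[where x=v], rule exI[where x=s1], rule exI[where x=s2], rule exI[where x=s3])
    apply (rule exI[where x=y1], rule exI[where x=y2], rule exI[where x=y3])
    apply (rule exI[where x=u3], rule exI[where x=u1], rule exI[where x=u2])
    by (rule ALL)
qed

lemma inj_core:
  fixes v s1 s2 s3 u1 u2 u3 y1 y2 y3 :: int
  assumes pos: "v \<ge> 1" "s1 \<ge> 1" "s2 \<ge> 1" "s3 \<ge> 1" "y1 \<ge> 1" "y2 \<ge> 1" "y3 \<ge> 1" "u3 > 0"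
    and eq: "s1*u1*y1^2 + s2*u2*y2^2 + s3*u3*y3^2 = 0"
    and moeb: "\<bar>moebius (nat \<bar>u1*u2*u3\<bar>)\<bar> = 1"
    and gsu: "gcd (s1*s2*s3) (u1*u2*u3*v) = 1"
    and gy: "gcd y1 y2 = 1" "gcd y1 y3 = 1" "gcd y2 y3 = 1"
    and gys: "gcd y1 (gcd s2 s3) = 1" "gcd y2 (gcd s1 s3) = 1" "gcd y3 (gcd s1 s2) = 1"
  defines "t1 \<equiv> s1*u1^2*u2*u3*v^2*y1^2" and "t2 \<equiv> s2*u1*u2^2*u3*v^2*y2^2"
    and "T \<equiv> u1^2*u2^2*u3^2*v^3*y1*y2*y3" and "n \<equiv> s1*s2*s3"
  defines "a3 \<equiv> -(t1+t2)"
  defines "G \<equiv> gcd (t1 div gcd t1 n) (gcd (t2 div gcd t2 n) (a3 div gcd a3 n))"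
  defines "b1 \<equiv> t1 div gcd t1 n div G" and "b2 \<equiv> t2 div gcd t2 n div G" and "b3 \<equiv> a3 div gcd a3 n div G"
  shows "u1 \<noteq> 0 \<and> u2 \<noteq> 0 \<and> T > 0 \<and> n > 0 \<and> a3 = s3*u1*u2*u3^2*v^2*y3^2 \<and>
    gcd (gcd t1 t2) (gcd T n) = 1 \<and>
    gcd t1 n = s1 \<and> gcd t2 n = s2 \<and> gcd a3 n = s3 \<and> square_part G = v \<and>
    sgn b3 * squarefree_part b1 = u1 \<and> sgn b3 * squarefree_part b2 = u2 \<and> sgn b3 * squarefree_part b3 = u3 \<and>
    square_part b1 = y1 \<and> square_part b2 = y2 \<and> square_part b3 = y3 \<and>
    (\<forall>t3. psi4 t1 t2 t3 n = ((v,(s1,s2,s3),(u1,u2,u3),(y1,y2,y3)), t3 > 0))"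
proof -
  define w where "w = u1*u2*u3"
  have sqw: "squarefree w" using moeb unfolding w_def moeb_abs sqf_nat_abs .
  hence wnz: "w \<noteq> 0" by auto
  hence unz: "u1 \<noteq> 0" "u2 \<noteq> 0" "u3 \<noteq> 0" by (auto simp: w_def)
  have sq: "squarefree u1" "squarefree u2" "squarefree u3"
    using sqw squarefree_mono unfolding w_def by (metis dvd_triv_left dvd_triv_right dvd_mult_left)+
  have a1f: "t1 = s1 * (u1*w*v^2*y1^2)" by (simp add: t1_def w_def power2_eq_square algebra_simps)
  have a2f: "t2 = s2 * (u2*w*v^2*y2^2)" by (simp add: t2_def w_def power2_eq_square algebra_simps)
  have a3f: "a3 = s3 * (u3*w*v^2*y3^2)"
  proof -
    have "t1 + t2 = w*v^2*(s1*u1*y1^2 + s2*u2*y2^2)" by (simp add: t1_def t2_def w_def power2_eq_square algebra_simps)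
    also have "s1*u1*y1^2 + s2*u2*y2^2 = -(s3*u3*y3^2)" using eq by simp
    finally show ?thesis by (simp add: a3_def algebra_simps)
  qed
  have Tf: "T = w^2 * v^3 * y1 * y2 * y3" by (simp add: T_def w_def power_mult_distrib)
  have Tpos: "T > 0" using Tf wnz pos by simp
  have npos: "n > 0" using pos by (simp add: n_def)
  note md = prime_elem_multiplicity_mult_distrib[OF pelem] prime_elem_multiplicity_power_distrib[OF pelem]
  have nzs: "s1 \<noteq> 0" "s2 \<noteq> 0" "s3 \<noteq> 0" "v \<noteq> 0" "y1 \<noteq> 0" "y2 \<noteq> 0" "y3 \<noteq> 0" using pos by auto
  have VI: "min (multiplicity p s1 + multiplicity p u1 + (multiplicity p u1 + multiplicity p u2 + multiplicity p u3) + 2*multiplicity p v + 2*multiplicity p y1) (multiplicity p s1 + multiplicity p s2 + multiplicity p s3) = multiplicity p s1 \<and>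
    min (multiplicity p s2 + multiplicity p u2 + (multiplicity p u1 + multiplicity p u2 + multiplicity p u3) + 2*multiplicity p v + 2*multiplicity p y2) (multiplicity p s1 + multiplicity p s2 + multiplicity p s3) = multiplicity p s2 \<and>
    min (multiplicity p s3 + multiplicity p u3 + (multiplicity p u1 + multiplicity p u2 + multiplicity p u3) + 2*multiplicity p v + 2*multiplicity p y3) (multiplicity p s1 + multiplicity p s2 + multiplicity p s3) = multiplicity p s3 \<and>
    min (multiplicity p u1 + (multiplicity p u1 + multiplicity p u2 + multiplicity p u3) + 2*multiplicity p v + 2*multiplicity p y1) (min (multiplicity p u2 + (multiplicity p u1 + multiplicity p u2 + multiplicity p u3) + 2*multiplicity p v + 2*multiplicity p y2) (multiplicity p u3 + (multiplicity p u1 + multiplicity p u2 + multiplicity p u3) + 2*multiplicity p v + 2*multiplicity p y3)) = multiplicity p u1 + multiplicity p u2 + multiplicity p u3 + 2*multiplicity p v \<and>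
    (multiplicity p s1 + multiplicity p u1 + (multiplicity p u1 + multiplicity p u2 + multiplicity p u3) + 2*multiplicity p v + 2*multiplicity p y1 = 0 \<or> multiplicity p s2 + multiplicity p u2 + (multiplicity p u1 + multiplicity p u2 + multiplicity p u3) + 2*multiplicity p v + 2*multiplicity p y2 = 0 \<or>
     2*(multiplicity p u1 + multiplicity p u2 + multiplicity p u3) + 3*multiplicity p v + multiplicity p y1 + multiplicity p y2 + multiplicity p y3 = 0 \<or> multiplicity p s1 + multiplicity p s2 + multiplicity p s3 = 0)"
    if p: "prime p" for p
  proof (rule val_inj)
    have "multiplicity p w \<le> 1" using squarefree_mult_le[OF sqw p] .
    thus "multiplicity p u1 + multiplicity p u2 + multiplicity p u3 \<le> 1" using unz p by (simp add: w_def md)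
    have cop: "multiplicity p x = 0 \<or> multiplicity p y = 0" if "gcd x y = 1" "x \<noteq> 0" "y \<noteq> 0" for x y :: int
    proof (rule ccontr)
      assume "\<not> ?thesis"
      hence "p dvd x" "p dvd y" using mult_pos_dvd[OF p] that by auto
      hence "p dvd gcd x y" by simp
      thus False using that p not_prime_unit by (metis dvd_1_iff_1 gcd_dvd1 is_unit_gcd)
    qed
    have "multiplicity p (s1*s2*s3) = 0 \<or> multiplicity p (u1*u2*u3*v) = 0"
      by (rule cop[OF gsu]) (use nzs unz in auto)
    thus "multiplicity p s1 + multiplicity p s2 + multiplicity p s3 = 0 \<or> multiplicity p u1 + multiplicity p u2 + multiplicity p u3 + multiplicity p v = 0"
      using nzs unz p by (simp add: md)
    show "multiplicity p y1 = 0 \<or> multiplicity p y2 = 0" by (rule cop[OF gy(1)]) (use nzs in auto)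
    show "multiplicity p y1 = 0 \<or> multiplicity p y3 = 0" by (rule cop[OF gy(2)]) (use nzs in auto)
    show "multiplicity p y2 = 0 \<or> multiplicity p y3 = 0" by (rule cop[OF gy(3)]) (use nzs in auto)
    have "multiplicity p y1 = 0 \<or> multiplicity p (gcd s2 s3) = 0" by (rule cop[OF gys(1)]) (use nzs in auto)
    thus "multiplicity p y1 = 0 \<or> multiplicity p s2 = 0 \<or> multiplicity p s3 = 0"
      using multiplicity_gcd[OF nzs(2,3) p] by auto
    have "multiplicity p y2 = 0 \<or> multiplicity p (gcd s1 s3) = 0" by (rule cop[OF gys(2)]) (use nzs in auto)
    thus "multiplicity p y2 = 0 \<or> multiplicity p s1 = 0 \<or> multiplicity p s3 = 0"
      using multiplicity_gcd[OF nzs(1,3) p] by auto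
    have "multiplicity p y3 = 0 \<or> multiplicity p (gcd s1 s2) = 0" by (rule cop[OF gys(3)]) (use nzs in auto)
    thus "multiplicity p y3 = 0 \<or> multiplicity p s1 = 0 \<or> multiplicity p s2 = 0"
      using multiplicity_gcd[OF nzs(1,2) p] by auto
    have mx: "multiplicity p (s1*u1*y1^2) = multiplicity p s1 + multiplicity p u1 + 2*multiplicity p y1"
      "multiplicity p (s2*u2*y2^2) = multiplicity p s2 + multiplicity p u2 + 2*multiplicity p y2"
      "multiplicity p (s3*u3*y3^2) = multiplicity p s3 + multiplicity p u3 + 2*multiplicity p y3"
      using nzs unz p by (simp_all add: md)
    have x0: "s1*u1*y1^2 \<noteq> 0" "s2*u2*y2^2 \<noteq> 0" "s3*u3*y3^2 \<noteq> 0" using nzs unz by auto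
    show "multiplicity p s1 + multiplicity p u1 + 2*multiplicity p y1 \<ge> min (multiplicity p s2 + multiplicity p u2 + 2*multiplicity p y2) (multiplicity p s3 + multiplicity p u3 + 2*multiplicity p y3)"
      using ultra[OF p eq x0(1)] unfolding mx .
    show "multiplicity p s2 + multiplicity p u2 + 2*multiplicity p y2 \<ge> min (multiplicity p s1 + multiplicity p u1 + 2*multiplicity p y1) (multiplicity p s3 + multiplicity p u3 + 2*multiplicity p y3)"
      using ultra[OF p _ x0(2), of "s1*u1*y1^2" "s3*u3*y3^2"] eq unfolding mx by (simp add: algebra_simps)
    show "multiplicity p s3 + multiplicity p u3 + 2*multiplicity p y3 \<ge> min (multiplicity p s1 + multiplicity p u1 + 2*multiplicity p y1) (multiplicity p s2 + multiplicity p u2 + 2*multiplicity p y2)"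
      using ultra[OF p _ x0(3), of "s1*u1*y1^2" "s2*u2*y2^2"] eq unfolding mx by (simp add: algebra_simps)
  qed
  have mw: "multiplicity p w = multiplicity p u1 + multiplicity p u2 + multiplicity p u3" if p: "prime p" for p
    using unz p by (simp add: w_def md)
  define al1 where "al1 = u1*w*v^2*y1^2"
  define al2 where "al2 = u2*w*v^2*y2^2"
  define al3 where "al3 = u3*w*v^2*y3^2"
  have alnz: "al1 \<noteq> 0" "al2 \<noteq> 0" "al3 \<noteq> 0" using unz wnz nzs by (simp_all add: al1_def al2_def al3_def)
  have mal: "multiplicity p al1 = multiplicity p u1 + (multiplicity p u1 + multiplicity p u2 + multiplicity p u3) + 2*multiplicity p v + 2*multiplicity p y1"
    "multiplicity p al2 = multiplicity p u2 + (multiplicity p u1 + multiplicity p u2 + multiplicity p u3) + 2*multiplicity p v + 2*multiplicity p y2"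
    "multiplicity p al3 = multiplicity p u3 + (multiplicity p u1 + multiplicity p u2 + multiplicity p u3) + 2*multiplicity p v + 2*multiplicity p y3"
    if p: "prime p" for p
    using unz wnz nzs p mw[OF p] by (simp_all add: al1_def al2_def al3_def md)
  have t1nz: "t1 \<noteq> 0" "t2 \<noteq> 0" "a3 \<noteq> 0" using a1f a2f a3f alnz nzs
    unfolding al1_def al2_def al3_def by simp_all
  have mn: "multiplicity p n = multiplicity p s1 + multiplicity p s2 + multiplicity p s3" if p: "prime p" for p
    using nzs p by (simp add: n_def md)
  have nn: "n \<noteq> 0" using npos by simp
  have g1: "gcd t1 n = s1"
  proof (rule int_eq_mult)
    fix p :: int assume p: "prime p"
    have mt: "multiplicity p t1 = multiplicity p s1 + multiplicity p u1 + (multiplicity p u1 + multiplicity p u2 + multiplicity p u3) + 2*multiplicity p v + 2*multiplicity p y1"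
      unfolding a1f al1_def using nzs unz wnz p mw[OF p] by (simp add: md)
    show "multiplicity p (gcd t1 n) = multiplicity p s1"
      unfolding multiplicity_gcd[OF t1nz(1) nn p] mt mn[OF p] by (rule conjunct1[OF VI[OF p]])
  qed (use t1nz pos in auto)
  have g2: "gcd t2 n = s2"
  proof (rule int_eq_mult)
    fix p :: int assume p: "prime p"
    have mt: "multiplicity p t2 = multiplicity p s2 + multiplicity p u2 + (multiplicity p u1 + multiplicity p u2 + multiplicity p u3) + 2*multiplicity p v + 2*multiplicity p y2"
      unfolding a2f al2_def using nzs unz wnz p mw[OF p] by (simp add: md)
    show "multiplicity p (gcd t2 n) = multiplicity p s2"
      unfolding multiplicity_gcd[OF t1nz(2) nn p] mt mn[OF p] by (rule conjunct1[OF conjunct2[OF VI[OF p]]])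
  qed (use t1nz pos in auto)
  have g3: "gcd a3 n = s3"
  proof (rule int_eq_mult)
    fix p :: int assume p: "prime p"
    have mt: "multiplicity p a3 = multiplicity p s3 + multiplicity p u3 + (multiplicity p u1 + multiplicity p u2 + multiplicity p u3) + 2*multiplicity p v + 2*multiplicity p y3"
      unfolding a3f al3_def using nzs unz wnz p mw[OF p] by (simp add: md)
    show "multiplicity p (gcd a3 n) = multiplicity p s3"
      unfolding multiplicity_gcd[OF t1nz(3) nn p] mt mn[OF p] by (rule conjunct1[OF conjunct2[OF conjunct2[OF VI[OF p]]]])
  qed (use t1nz pos in auto)
  have dv: "t1 div gcd t1 n = al1" "t2 div gcd t2 n = al2" "a3 div gcd a3 n = al3"
    unfolding g1 g2 g3 unfolding a1f a2f a3f al1_def[symmetric] al2_def[symmetric] al3_def[symmetric] using nzs by simp_all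
  have GG: "G = \<bar>w\<bar> * v^2"
  proof (rule int_eq_mult)
    have gnz: "gcd al2 al3 \<noteq> 0" using alnz by simp
    fix p :: int assume p: "prime p"
    show "multiplicity p G = multiplicity p (\<bar>w\<bar> * v^2)"
      unfolding G_def dv multiplicity_gcd[OF alnz(1) gnz p] multiplicity_gcd[OF alnz(2,3) p]
      using VI[OF p] mal[OF p] wnz nzs p mw[OF p] by (simp add: md)
  qed (use alnz wnz nzs dv in \<open>auto simp: G_def\<close>)
  have sw: "sgn w * sgn w = 1" "\<bar>w\<bar> * sgn w = w" using wnz by (auto simp: sgn_if)
  have bf: "b1 = (sgn w * u1) * y1^2" "b2 = (sgn w * u2) * y2^2" "b3 = (sgn w * u3) * y3^2"
  proof -
    have "al1 = (\<bar>w\<bar> * v^2) * ((sgn w * u1) * y1^2)" "al2 = (\<bar>w\<bar> * v^2) * ((sgn w * u2) * y2^2)"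
      "al3 = (\<bar>w\<bar> * v^2) * ((sgn w * u3) * y3^2)"
      unfolding al1_def al2_def al3_def using sw(2) by (simp_all add: algebra_simps)
    thus "b1 = (sgn w * u1) * y1^2" "b2 = (sgn w * u2) * y2^2" "b3 = (sgn w * u3) * y3^2"
      unfolding b1_def b2_def b3_def dv GG using wnz nzs by simp_all
  qed
  have sqs: "squarefree (sgn w * u1)" "squarefree (sgn w * u2)" "squarefree (sgn w * u3)"
    using sq wnz by (auto simp: sgn_if)
  have sqa: "squarefree \<bar>w\<bar>" using sqw by (simp add: abs_if)
  have ypos: "y1 > 0" "y2 > 0" "y3 > 0" "v > 0" using pos by auto
  have sb3: "sgn b3 = sgn w" unfolding bf using pos ypos by (simp add: sgn_mult)
  have r1: "square_part G = v" unfolding GG using L1(1)[OF sqa ypos(4)] .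
  have r2: "sgn b3 * squarefree_part b1 = u1" "sgn b3 * squarefree_part b2 = u2" "sgn b3 * squarefree_part b3 = u3"
    unfolding sb3 unfolding bf L1(2)[OF sqs(1) ypos(1)] L1(2)[OF sqs(2) ypos(2)] L1(2)[OF sqs(3) ypos(3)]
    using sw(1) by (simp_all add: mult.assoc[symmetric])
  have r3: "square_part b1 = y1" "square_part b2 = y2" "square_part b3 = y3"
    unfolding bf using L1(1)[OF sqs(1) ypos(1)] L1(1)[OF sqs(2) ypos(2)] L1(1)[OF sqs(3) ypos(3)] by simp_all
  have prim: "gcd (gcd t1 t2) (gcd T n) = 1"
  proof (rule int_eq_mult)
    fix p :: int assume p: "prime p"
    have nz2: "gcd t1 t2 \<noteq> 0" "gcd T n \<noteq> 0" using t1nz npos by auto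
    have mT: "multiplicity p T = 2*(multiplicity p u1 + multiplicity p u2 + multiplicity p u3) + 3*multiplicity p v + multiplicity p y1 + multiplicity p y2 + multiplicity p y3"
      unfolding Tf using wnz nzs p mw[OF p] by (simp add: md)
    have m1: "multiplicity p t1 = multiplicity p s1 + multiplicity p u1 + (multiplicity p u1 + multiplicity p u2 + multiplicity p u3) + 2*multiplicity p v + 2*multiplicity p y1"
      unfolding a1f al1_def using nzs unz wnz p mw[OF p] by (simp add: md)
    have m2: "multiplicity p t2 = multiplicity p s2 + multiplicity p u2 + (multiplicity p u1 + multiplicity p u2 + multiplicity p u3) + 2*multiplicity p v + 2*multiplicity p y2"
      unfolding a2f al2_def using nzs unz wnz p mw[OF p] by (simp add: md)
    have Tn: "T \<noteq> 0" using Tpos by simp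
    note c5 = conjunct2[OF conjunct2[OF conjunct2[OF conjunct2[OF VI[OF p]]]]]
    show "multiplicity p (gcd (gcd t1 t2) (gcd T n)) = multiplicity p 1"
      unfolding multiplicity_gcd[OF nz2 p] multiplicity_gcd[OF t1nz(1,2) p] multiplicity_gcd[OF Tn nn p]
        m1 m2 mT mn[OF p] multiplicity_one
      using c5 by (elim disjE) (simp_all only: min_0L min_0R)
  qed (use t1nz in auto)
  have a3e: "a3 = s3*u1*u2*u3^2*v^2*y3^2" unfolding a3f w_def by (simp add: algebra_simps power2_eq_square)
  have PSI: "psi4 t1 t2 t3 n = ((v,(s1,s2,s3),(u1,u2,u3),(y1,y2,y3)), t3 > 0)" for t3
    unfolding psi4_def Let_def
    unfolding a3_def[symmetric]
    unfolding G_def[symmetric]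
    unfolding b1_def[symmetric] b2_def[symmetric] b3_def[symmetric]
    using g1 g2 g3 r1 r2 r3 by simp
  show ?thesis using unz Tpos npos a3e prim g1 g2 g3 r1 r2 r3 PSI by simp
qed

definition phi :: "((int \<times> (int \<times> int \<times> int) \<times> (int \<times> int \<times> int) \<times> (int \<times> int \<times> int)) \<times> bool) \<Rightarrow> vec4" where
 "phi x = (case x of ((v,(s1,s2,s3),(u1,u2,u3),(y1,y2,y3)),e) \<Rightarrow>
    (s1*u1^2*u2*u3*v^2*y1^2, s2*u1*u2^2*u3*v^2*y2^2,
     (if e then 1 else -1)*(u1^2*u2^2*u3^2*v^3*y1*y2*y3), -(s1*s2*s3)))"

definition psi :: "vec4 \<Rightarrow> (int \<times> (int \<times> int \<times> int) \<times> (int \<times> int \<times> int) \<times> (int \<times> int \<times> int)) \<times> bool" where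
 "psi t = (case t of (t1,t2,t3,t4) \<Rightarrow> psi4 t1 t2 t3 (-t4))"

definition Tneg :: "real \<Rightarrow> vec4 set" where
 "Tneg B = {t. primitive4 t \<and> inU t \<and> real_of_int (H4 t) \<le> B \<and> snd (snd (snd t)) < 0}"

lemma maxperm: "max (max a b) (max c d) = max (max (d::int) c) (max a b)" by (auto simp: max_def)

lemma phi_props:
  assumes "x \<in> param_set B \<times> UNIV"
  shows "phi x \<in> Tneg B \<and> psi (phi x) = x"
proof -
  obtain v s1 s2 s3 u1 u2 u3 y1 y2 y3 e where x: "x = ((v,(s1,s2,s3),(u1,u2,u3),(y1,y2,y3)),e)"
    by (metis prod.collapse)
  have m: "v \<ge> 1" "s1 \<ge> 1" "s2 \<ge> 1" "s3 \<ge> 1" "y1 \<ge> 1" "y2 \<ge> 1" "y3 \<ge> 1" "u3 > 0"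
    "real_of_int (Psi v (s1,s2,s3) (u1,u2,u3) (y1,y2,y3)) \<le> B"
    "s1*u1*y1^2 + s2*u2*y2^2 + s3*u3*y3^2 = 0"
    "\<bar>moebius (nat \<bar>u1*u2*u3\<bar>)\<bar> = 1"
    "gcd (s1*s2*s3) (u1*u2*u3*v) = 1"
    "gcd y1 y2 = 1" "gcd y1 y3 = 1" "gcd y2 y3 = 1"
    "gcd y1 (gcd s2 s3) = 1" "gcd y2 (gcd s1 s3) = 1" "gcd y3 (gcd s1 s2) = 1"
    using assms unfolding x by (simp_all add: param_set_def)
  note I = inj_core[OF m(1-8) m(10-18)]
  define t1 where "t1 = s1*u1^2*u2*u3*v^2*y1^2"
  define t2 where "t2 = s2*u1*u2^2*u3*v^2*y2^2"
  define T where "T = u1^2*u2^2*u3^2*v^3*y1*y2*y3"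
  define n where "n = s1*s2*s3"
  define \<epsilon> :: int where "\<epsilon> = (if e then 1 else -1)"
  have I': "u1 \<noteq> 0" "u2 \<noteq> 0" "T > 0" "n > 0" "-(t1+t2) = s3*u1*u2*u3^2*v^2*y3^2"
    "gcd (gcd t1 t2) (gcd T n) = 1"
    "\<And>t3. psi4 t1 t2 t3 n = ((v,(s1,s2,s3),(u1,u2,u3),(y1,y2,y3)), t3 > 0)"
    using I unfolding t1_def t2_def T_def n_def by blast+
  have px: "phi x = (t1, t2, \<epsilon>*T, -n)" unfolding x phi_def t1_def t2_def T_def n_def \<epsilon>_def by simp
  have e: "(\<epsilon>*T > 0) = e" using I'(3) by (simp add: \<epsilon>_def)
  have psi: "psi (phi x) = x" unfolding px psi_def using I'(7)[of "\<epsilon>*T"] e x by simp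
  have prim: "primitive4 (t1, t2, \<epsilon>*T, -n)"
    using I'(6) by (simp add: primitive4_def \<epsilon>_def)
  have nz: "t1 \<noteq> 0" "t2 \<noteq> 0" "t1 + t2 \<noteq> 0" "\<epsilon>*T \<noteq> 0" "-n \<noteq> 0"
  proof -
    show "t1 \<noteq> 0" using I' m unfolding t1_def by simp
    show "t2 \<noteq> 0" using I' m unfolding t2_def by simp
    show "t1 + t2 \<noteq> 0"
    proof
      assume "t1 + t2 = 0"
      hence "s3*u1*u2*u3^2*v^2*y3^2 = 0" using I'(5) by simp
      thus False using I' m by simp
    qed
    show "\<epsilon>*T \<noteq> 0" "-n \<noteq> 0" using I' by (auto simp: \<epsilon>_def)
  qed
  have onS: "t1 * t2 * (t1 + t2) = (\<epsilon>*T)^2 * (-n)"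
  proof -
    have "t1 + t2 = -(s3*u1*u2*u3^2*v^2*y3^2)" using I'(5) by simp
    moreover have "(\<epsilon>*T)^2 = T^2" by (simp add: \<epsilon>_def)
    moreover have "t1 * t2 * (s3*u1*u2*u3^2*v^2*y3^2) = T^2 * n"
      unfolding t1_def t2_def T_def n_def by algebra
    ultimately show ?thesis by simp
  qed
  have U: "inU (t1, t2, \<epsilon>*T, -n)" using nz onS by (simp add: inU_def onS_def)
  have H: "H4 (t1, t2, \<epsilon>*T, -n) = Psi v (s1,s2,s3) (u1,u2,u3) (y1,y2,y3)"
  proof -
    have "\<bar>\<epsilon>*T\<bar> = \<bar>u1^2*u2^2*u3^2*v^3*y1*y2*y3\<bar>" by (simp add: \<epsilon>_def T_def abs_mult)
    moreover have "\<bar>-n\<bar> = \<bar>s1*s2*s3\<bar>" by (simp add: n_def)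
    ultimately show ?thesis unfolding H4_def Psi_def t1_def t2_def
      by (simp only: prod.case) (rule maxperm)
  qed
  have "phi x \<in> Tneg B" unfolding px Tneg_def using prim U H m(9) I'(4) by simp
  thus ?thesis using psi by simp
qed

lemma psi_props:
  assumes "t \<in> Tneg B"
  shows "psi t \<in> param_set B \<times> UNIV \<and> phi (psi t) = t"
proof -
  obtain t1 t2 t3 t4 where t: "t = (t1,t2,t3,t4)" by (metis prod.collapse)
  have h: "primitive4 (t1,t2,t3,t4)" "inU (t1,t2,t3,t4)" "real_of_int (H4 (t1,t2,t3,t4)) \<le> B" "t4 < 0"
    using assms unfolding t Tneg_def by simp_all
  note S = surj_core[OF h(1,2,4)]
  obtain v s1 s2 s3 u1 u2 u3 y1 y2 y3 where c: "v \<ge> 1" "s1 \<ge> 1" "s2 \<ge> 1" "s3 \<ge> 1" "y1 \<ge> 1" "y2 \<ge> 1" "y3 \<ge> 1" "u3 > 0"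
    "t1 = s1*u1^2*u2*u3*v^2*y1^2" "t2 = s2*u1*u2^2*u3*v^2*y2^2"
    "\<bar>t3\<bar> = u1^2*u2^2*u3^2*v^3*y1*y2*y3" "t4 = -(s1*s2*s3)"
    "s1*u1*y1^2 + s2*u2*y2^2 + s3*u3*y3^2 = 0"
    "\<bar>moebius (nat \<bar>u1*u2*u3\<bar>)\<bar> = 1"
    "gcd (s1*s2*s3) (u1*u2*u3*v) = 1"
    "gcd y1 y2 = 1" "gcd y1 y3 = 1" "gcd y2 y3 = 1"
    "gcd y1 (gcd s2 s3) = 1" "gcd y2 (gcd s1 s3) = 1" "gcd y3 (gcd s1 s2) = 1"
    "t3 \<noteq> 0" "psi4 t1 t2 t3 (-t4) = ((v,(s1,s2,s3),(u1,u2,u3),(y1,y2,y3)), t3 > 0)"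
    by atomize_elim (rule S)
  have pt: "psi t = ((v,(s1,s2,s3),(u1,u2,u3),(y1,y2,y3)), t3 > 0)" unfolding t psi_def using c(23) by simp
  have HP: "H4 (t1,t2,t3,t4) = Psi v (s1,s2,s3) (u1,u2,u3) (y1,y2,y3)"
  proof -
    have a4: "\<bar>t4\<bar> = \<bar>s1*s2*s3\<bar>" using c(12) by simp
    have a3: "\<bar>t3\<bar> = \<bar>u1^2*u2^2*u3^2*v^3*y1*y2*y3\<bar>" using c(11) by (metis abs_abs)
    show ?thesis unfolding H4_def Psi_def
      by (simp only: prod.case a3 c(9) c(10) a4) (rule maxperm)
  qed
  have mem: "psi t \<in> param_set B \<times> UNIV" unfolding pt param_set_def
    using c h(3) HP by simp
  have "phi (psi t) = t"
  proof -
    have "(if t3 > 0 then 1 else -1) * (u1^2*u2^2*u3^2*v^3*y1*y2*y3) = t3"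
      using c(11) c(22) by (auto simp: abs_if)
    thus ?thesis unfolding pt phi_def unfolding t using c(9,10,12) by simp
  qed
  thus ?thesis using mem by simp
qed

lemma U_t4: "inU (t1,t2,t3,t4) \<Longrightarrow> t4 \<noteq> 0"
  by (auto simp: inU_def onS_def)

lemma neg_in:
  assumes "primitive4 t" "inU t" "real_of_int (H4 t) \<le> B"
  shows "primitive4 (neg4 t) \<and> inU (neg4 t) \<and> real_of_int (H4 (neg4 t)) \<le> B"
proof -
  obtain a b c d where t: "t = (a,b,c,d)" by (metis prod.collapse)
  have S: "a * b * (a + b) = c^2 * d" and
    C: "\<not> (a = 0 \<and> c = 0)" "\<not> (a = 0 \<and> d = 0)" "\<not> (b = 0 \<and> c = 0)" "\<not> (b = 0 \<and> d = 0)"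
       "\<not> (c = 0 \<and> a + b = 0)" "\<not> (d = 0 \<and> a + b = 0)"
    using assms(2) unfolding t inU_def onS_def by simp_all
  have S': "-a * -b * (-a + -b) = (-c)^2 * (-d)"
  proof -
    have "-a * -b * (-a + -b) = -(a * b * (a + b))" by (simp add: algebra_simps)
    also have "\<dots> = (-c)^2 * (-d)" using S by simp
    finally show ?thesis .
  qed
  have C': "\<not> (-a = 0 \<and> -c = 0)" "\<not> (-a = 0 \<and> -d = 0)" "\<not> (-b = 0 \<and> -c = 0)" "\<not> (-b = 0 \<and> -d = 0)"
       "\<not> (-c = 0 \<and> -a + -b = 0)" "\<not> (-d = 0 \<and> -a + -b = 0)"
    using C by auto
  have U': "inU (neg4 t)" unfolding t neg4_def inU_def onS_def using S' C' by (simp only: prod.case) blast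
  have P': "primitive4 (neg4 t)" using assms(1) unfolding t neg4_def primitive4_def by simp
  have H': "H4 (neg4 t) = H4 t" unfolding t neg4_def H4_def by simp
  show ?thesis using U' P' H' assms(3) by simp
qed

theorem lemma4p4:
  fixes B :: real
  shows "N_U B = 2 * card (param_set B)"
proof -
  let ?S = "{t. primitive4 t \<and> inU t \<and> real_of_int (H4 t) \<le> B}"
  let ?f = "\<lambda>t. {t, neg4 t}"
  have nn: "neg4 (neg4 t) = t" for t by (cases t) (simp add: neg4_def)
  have img: "?f ` ?S = ?f ` Tneg B"
  proof
    show "?f ` ?S \<subseteq> ?f ` Tneg B"
    proof
      fix X assume "X \<in> ?f ` ?S"
      then obtain t where tS: "t \<in> ?S" and X: "X = ?f t" by blast
      obtain a b c d where t: "t = (a,b,c,d)" by (metis prod.collapse)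
      have d0: "d \<noteq> 0" using tS U_t4 unfolding t by auto
      show "X \<in> ?f ` Tneg B"
      proof (cases "d < 0")
        case True
        then have "t \<in> Tneg B" using tS unfolding Tneg_def t by simp
        thus ?thesis using X by blast
      next
        case False
        have "neg4 t \<in> Tneg B" using neg_in[of t B] tS False d0 unfolding Tneg_def t
          by (simp add: neg4_def)
        moreover have "X = ?f (neg4 t)" unfolding X nn by blast
        ultimately show ?thesis by blast
      qed
    qed
  next
    show "?f ` Tneg B \<subseteq> ?f ` ?S" unfolding Tneg_def by blast
  qed
  have inj: "inj_on ?f (Tneg B)"
  proof (rule inj_onI)
    fix x y assume x: "x \<in> Tneg B" and y: "y \<in> Tneg B" and e: "?f x = ?f y"
    then have "x = y \<or> x = neg4 y" by blast
    moreover have "x \<noteq> neg4 y" using x y unfolding Tneg_def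
      by (cases x, cases y) (auto simp: neg4_def)
    ultimately show "x = y" by blast
  qed
  have N: "N_U B = card (Tneg B)" unfolding N_U_def img using card_image[OF inj] .
  have bij: "bij_betw phi (param_set B \<times> (UNIV :: bool set)) (Tneg B)"
  proof (rule bij_betw_byWitness[where f' = psi])
    show "\<forall>a\<in>param_set B \<times> UNIV. psi (phi a) = a" using phi_props by blast
    show "\<forall>a'\<in>Tneg B. phi (psi a') = a'" using psi_props by blast
    show "phi ` (param_set B \<times> UNIV) \<subseteq> Tneg B" using phi_props by blast
    show "psi ` Tneg B \<subseteq> param_set B \<times> UNIV" using psi_props by blast
  qed
  have "card (Tneg B) = card (param_set B \<times> (UNIV :: bool set))" using bij_betw_same_card[OF bij] by simp
  also have "\<dots> = card (param_set B) * 2" by (simp add: card_cartesian_product)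
  finally show ?thesis using N by simp
qed

end
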